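(* Let $p,q$ be squarefree positive integers such that $K=\mathbb{Q}(\sqrt p,\sqrt q)$ has degree $4$ over $\mathbb{Q}$, and let $r=\frac{pq}{\gcd(p,q)^2}$. Assume that $\alpha$ is a totally positive element of $\mathcal{O}_K$ satisfying $N(\alpha)<2\min(\sqrt p,\sqrt q,\sqrt r)$, where $N$ is the norm from $K$ to $\mathbb{Q}$, and such that $n\nmid\alpha$ in $\mathcal{O}_K$ for every integer $n>1$. Then $\alpha$ is indecomposable.
   Context: An element of $K$ is totally positive if all its images under the real embeddings of $K$ are positive. A totally positive $\alpha\in\mathcal{O}_K$ is (additively) indecomposable if it cannot be written as $\alpha=\beta+\gamma$ with $\beta,\gamma$ totally positive elements of $\mathcal{O}_K$. *)

theory Defs
  imports "HOL-Computational_Algebra.Computational_Algebra"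
begin

definition biquad_field :: "nat \<Rightarrow> nat \<Rightarrow> real set" where
  "biquad_field p q =
     {of_rat a + of_rat b * sqrt (real p) + of_rat c * sqrt (real q)
        + of_rat d * sqrt (real p * real q) | a b c d. True}"

definition ring_of_integers :: "nat \<Rightarrow> nat \<Rightarrow> real set" where
  "ring_of_integers p q = {x \<in> biquad_field p q. algebraic_int x}"

text \<open>Real embeddings of K: ring homomorphisms K \<rightarrow> R (made extensional by
  sending elements outside K to 0).\<close>
definition real_embeddings :: "nat \<Rightarrow> nat \<Rightarrow> (real \<Rightarrow> real) set" where
  "real_embeddings p q =
     {\<sigma>. (\<forall>x\<in>biquad_field p q. \<forall>y\<in>biquad_field p q.
            \<sigma> (x + y) = \<sigma> x + \<sigma> y \<and> \<sigma> (x * y) = \<sigma> x * \<sigma> y)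
         \<and> \<sigma> 1 = 1
         \<and> (\<forall>x. x \<notin> biquad_field p q \<longrightarrow> \<sigma> x = 0)}"

definition totally_positive :: "nat \<Rightarrow> nat \<Rightarrow> real \<Rightarrow> bool" where
  "totally_positive p q x \<longleftrightarrow>
     x \<in> biquad_field p q \<and> (\<forall>\<sigma>\<in>real_embeddings p q. \<sigma> x > 0)"

definition field_norm :: "nat \<Rightarrow> nat \<Rightarrow> real \<Rightarrow> real" where
  "field_norm p q x = (\<Prod>\<sigma>\<in>real_embeddings p q. \<sigma> x)"

definition indecomposable :: "nat \<Rightarrow> nat \<Rightarrow> real \<Rightarrow> bool" where
  "indecomposable p q \<alpha> \<longleftrightarrow>
     \<alpha> \<in> ring_of_integers p q \<and> totally_positive p q \<alpha> \<and>
     \<not> (\<exists>\<beta>\<in>ring_of_integers p q. \<exists>\<gamma>\<in>ring_of_integers p q.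
           totally_positive p q \<beta> \<and> totally_positive p q \<gamma> \<and> \<alpha> = \<beta> + \<gamma>)"

end

theory Submission
  imports Defs "Jordan_Normal_Form.Char_Poly"
begin


lemma mod_crit:
  fixes x :: real and vs :: "real list"
  assumes nz: "\<exists>v\<in>set vs. v \<noteq> 0"
    and cl: "\<forall>i<length vs. \<exists>c. x * vs!i = (\<Sum>j<length vs. of_int (c j) * vs!j)"
  shows "algebraic_int x"
proof -
  define n where "n = length vs"
  from cl obtain C where C: "\<forall>i<n. x * vs!i = (\<Sum>j<n. of_int (C i j) * vs!j)"
    unfolding n_def by metis
  define B :: "int mat" where "B = mat n n (\<lambda>(i,j). C i j)"
  define A :: "real mat" where "A = map_mat of_int B"
  define v :: "real vec" where "v = vec n (\<lambda>i. vs!i)"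
  have Bc: "B \<in> carrier_mat n n" by (simp add: B_def)
  have Ac: "A \<in> carrier_mat n n" by (simp add: A_def B_def)
  have Av: "A *\<^sub>v v = x \<cdot>\<^sub>v v"
  proof (rule eq_vecI)
    fix i assume "i < dim_vec (x \<cdot>\<^sub>v v)"
    hence i: "i < n" by (simp add: v_def)
    have "(A *\<^sub>v v) $ i = (\<Sum>j<n. of_int (C i j) * vs!j)"
      using i by (simp add: A_def B_def v_def mult_mat_vec_def scalar_prod_def lessThan_atLeast0)
    also have "\<dots> = x * vs!i" using C i by simp
    finally show "(A *\<^sub>v v) $ i = (x \<cdot>\<^sub>v v) $ i" using i by (simp add: v_def)
  qed (simp add: A_def B_def v_def)
  have v0: "v \<noteq> 0\<^sub>v n"
  proof
    assume "v = 0\<^sub>v n"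
    hence "\<forall>i<n. vs!i = 0" by (metis index_vec index_zero_vec(1) v_def)
    thus False using nz by (metis in_set_conv_nth n_def)
  qed
  have "eigenvector A v x" unfolding eigenvector_def using Ac v0 Av
    by (simp add: v_def)
  hence "eigenvalue A x" unfolding eigenvalue_def by blast
  hence "poly (char_poly A) x = 0" using eigenvalue_root_char_poly[OF Ac] by simp
  moreover have "char_poly A = map_poly of_int (char_poly B)"
    unfolding A_def by (rule of_int_hom.char_poly_hom[OF Bc])
  moreover have "lead_coeff (char_poly B) = 1"
    using degree_monic_char_poly[OF Bc] by simp
  ultimately show ?thesis unfolding algebraic_int_altdef_ipoly by auto
qed


inductive_set zspan :: "real set \<Rightarrow> real set" for M where
  zs0: "0 \<in> zspan M"
| zsb: "m \<in> M \<Longrightarrow> m \<in> zspan M"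
| zsadd: "a \<in> zspan M \<Longrightarrow> b \<in> zspan M \<Longrightarrow> a + b \<in> zspan M"
| zsneg: "a \<in> zspan M \<Longrightarrow> - a \<in> zspan M"

lemma zspan_nat_mult: "a \<in> zspan M \<Longrightarrow> of_nat k * a \<in> zspan M"
  by (induction k) (auto simp: distrib_right intro: zspan.intros)

lemma zspan_int_mult: assumes "a \<in> zspan M" shows "of_int k * a \<in> zspan M"
proof (cases "k \<ge> 0")
  case True
  then show ?thesis using zspan_nat_mult[OF assms, of "nat k"] by (metis of_nat_nat)
next
  case False
  then have "of_int k * a = - (of_nat (nat (-k)) * a)" by simp
  then show ?thesis using zspan_nat_mult[OF assms, of "nat (-k)"] zsneg by metis
qed

lemma zspan_sum: "finite I \<Longrightarrow> (\<And>i. i \<in> I \<Longrightarrow> f i \<in> zspan M) \<Longrightarrow> sum f I \<in> zspan M"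
  by (induction I rule: finite_induct) (auto intro: zspan.intros)

lemma zspan_mono: assumes "M \<subseteq> N" "a \<in> zspan M" shows "a \<in> zspan N"
  using assms(2) by induction (use assms(1) in \<open>auto intro: zspan.intros\<close>)

lemma zspan_mult:
  assumes AB: "\<And>a b. a \<in> A \<Longrightarrow> b \<in> B \<Longrightarrow> a * b \<in> zspan C"
    and u: "u \<in> zspan A" and v: "v \<in> zspan B"
  shows "u * v \<in> zspan C"
  using u
proof (induction u rule: zspan.induct)
  case (zsb a)
  show ?case using v
    by (induction v rule: zspan.induct)
       (auto simp: distrib_left intro: zspan.intros AB[OF zsb])
qed (auto simp: distrib_right intro: zspan.intros)

lemma zspan_repr:
  assumes "finite M" "a \<in> zspan M"
  shows "\<exists>c. a = (\<Sum>m\<in>M. of_int (c m) * m)"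
  using assms(2)
proof (induction a rule: zspan.induct)
  case zs0
  show ?case by (rule exI[of _ "\<lambda>_. 0"]) simp
next
  case (zsb m)
  show ?case
  proof (rule exI[of _ "\<lambda>x. if x = m then 1 else 0"])
    have "(\<Sum>x\<in>M. of_int (if x = m then 1 else 0) * x) = (\<Sum>x\<in>M. if x = m then x else 0)"
      by (rule sum.cong) auto
    also have "\<dots> = m" using zsb assms(1) by (simp add: sum.delta)
    finally show "m = (\<Sum>x\<in>M. of_int (if x = m then 1 else 0) * x)" by simp
  qed
next
  case (zsadd a b)
  then obtain c d where "a = (\<Sum>m\<in>M. of_int (c m) * m)" "b = (\<Sum>m\<in>M. of_int (d m) * m)" by blast
  then show ?case
    by (intro exI[of _ "\<lambda>m. c m + d m"]) (simp add: sum.distrib distrib_right)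
next
  case (zsneg a)
  then obtain c where "a = (\<Sum>m\<in>M. of_int (c m) * m)" by blast
  then show ?case
    by (intro exI[of _ "\<lambda>m. - c m"]) (simp add: sum_negf)
qed

lemma mod_crit_set:
  fixes x :: real
  assumes fin: "finite M" and nz: "\<exists>m\<in>M. m \<noteq> 0"
    and cl: "\<And>m. m \<in> M \<Longrightarrow> x * m \<in> zspan M"
  shows "algebraic_int x"
proof -
  obtain vs where vs: "set vs = M" "distinct vs" using finite_distinct_list[OF fin] by blast
  have bij: "bij_betw (\<lambda>j. vs ! j) {..<length vs} M"
    using vs by (simp add: bij_betw_def inj_on_def nth_eq_iff_index_eq lessThan_atLeast0 set_conv_nth)
       (auto simp: set_conv_nth)
  show ?thesis
  proof (rule mod_crit)
    show "\<exists>v\<in>set vs. v \<noteq> 0" using nz vs by simp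
    show "\<forall>i<length vs. \<exists>c. x * vs ! i = (\<Sum>j<length vs. of_int (c j) * vs ! j)"
    proof (intro allI impI)
      fix i assume "i < length vs"
      hence "vs ! i \<in> M" using vs by auto
      then obtain c where c: "x * vs ! i = (\<Sum>m\<in>M. of_int (c m) * m)"
        using zspan_repr[OF fin cl] by blast
      also have "\<dots> = (\<Sum>j<length vs. of_int (c (vs ! j)) * vs ! j)"
        by (rule sum.reindex_bij_betw[OF bij, symmetric])
      finally show "\<exists>c. x * vs ! i = (\<Sum>j<length vs. of_int (c j) * vs ! j)"
        by (intro exI[of _ "\<lambda>j. c (vs ! j)"])
    qed
  qed
qed

lemma alg_int_pow_span:
  fixes x :: real
  assumes "algebraic_int x"
  shows "\<exists>n>0. \<forall>N. x ^ N \<in> zspan {x ^ i | i. i < n}"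
proof -
  from assms obtain P where P: "lead_coeff P = 1" "\<forall>i. coeff P i \<in> \<int>" "poly P x = 0"
    by (auto elim: algebraic_int.cases)
  define n where "n = degree P"
  have n0: "n > 0"
  proof (rule ccontr)
    assume "\<not> n > 0"
    hence "degree P = 0" by (simp add: n_def)
    hence "poly P x = coeff P 0" by (simp add: poly_altdef)
    also have "coeff P 0 = 1" using P(1) \<open>degree P = 0\<close> by simp
    finally show False using P(3) by simp
  qed
  have "\<forall>i. \<exists>z. coeff P i = of_int z" using P(2) by (auto elim!: Ints_cases)
  then obtain k where k0: "\<forall>i. coeff P i = of_int (k i)" by (rule choice[THEN exE])
  have k: "coeff P i = of_int (k i)" for i using k0 by simp
  have xn: "x ^ n = - (\<Sum>i<n. of_int (k i) * x ^ i)"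
  proof -
    have "0 = (\<Sum>i\<le>n. coeff P i * x ^ i)" using P(3) by (simp add: poly_altdef n_def)
    also have "{..n} = insert n {..<n}" by auto
    also have "(\<Sum>i\<in>insert n {..<n}. coeff P i * x ^ i) = coeff P n * x ^ n + (\<Sum>i<n. coeff P i * x ^ i)"
      by (subst sum.insert) auto
    also have "coeff P n = 1" using P(1) by (simp add: n_def)
    finally have "x ^ n + (\<Sum>i<n. coeff P i * x ^ i) = 0" by simp
    thus ?thesis using k by (simp add: eq_neg_iff_add_eq_0)
  qed
  let ?X = "{x ^ i | i. i < n}"
  have "x ^ N \<in> zspan ?X" for N
  proof (induction N rule: less_induct)
    case (less N)
    show ?case
    proof (cases "N < n")
      case True then show ?thesis by (auto intro: zsb)
    next
      case False
      then have "N = (N - n) + n" by simp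
      then have "x ^ N = x ^ (N - n) * x ^ n" by (metis power_add)
      also have "\<dots> = - (\<Sum>i<n. x ^ (N - n) * (of_int (k i) * x ^ i))"
        by (simp only: xn sum_distrib_left mult_minus_right)
      also have "\<dots> = - (\<Sum>i<n. of_int (k i) * x ^ (N - n + i))"
        by (simp only: power_add mult.left_commute)
      finally have eq: "x ^ N = - (\<Sum>i<n. of_int (k i) * x ^ (N - n + i))" .
      have "(\<Sum>i<n. of_int (k i) * x ^ (N - n + i)) \<in> zspan ?X"
      proof (rule zspan_sum)
        fix i assume "i \<in> {..<n}"
        hence "N - n + i < N" using False n0 by auto
        hence "x ^ (N - n + i) \<in> zspan ?X" by (rule less.IH)
        thus "of_int (k i) * x ^ (N - n + i) \<in> zspan ?X" by (rule zspan_int_mult)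
      qed simp
      then show ?thesis unfolding eq by (rule zsneg)
    qed
  qed
  then show ?thesis using n0 by blast
qed

lemma alg_int_add_mult:
  fixes x y :: real
  assumes "algebraic_int x" "algebraic_int y"
  shows "algebraic_int (x + y)" "algebraic_int (x * y)"
proof -
  obtain n where n: "n > 0" "\<And>N. x ^ N \<in> zspan {x ^ i | i. i < n}"
    using alg_int_pow_span[OF assms(1)] by blast
  obtain l where l: "l > 0" "\<And>N. y ^ N \<in> zspan {y ^ i | i. i < l}"
    using alg_int_pow_span[OF assms(2)] by blast
  define M where "M = (\<lambda>(i,j). x ^ i * y ^ j) ` ({..<n} \<times> {..<l})"
  have fin: "finite M" by (simp add: M_def)
  have "(0,0) \<in> {..<n} \<times> {..<l}" using n l by simp
  then have "(\<lambda>(i,j). x ^ i * y ^ j) (0,0) \<in> M" unfolding M_def by (rule imageI)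
  then have one: "1 \<in> M" by simp
  have pw: "x ^ N * y ^ L \<in> zspan M" for N L
  proof (rule zspan_mult[OF _ n(2) l(2)])
    fix a b assume "a \<in> {x ^ i | i. i < n}" "b \<in> {y ^ i | i. i < l}"
    then obtain i j where ij: "a = x ^ i" "i < n" "b = y ^ j" "j < l" by blast
    then have "(i, j) \<in> {..<n} \<times> {..<l}" by simp
    then have "(\<lambda>(i,j). x ^ i * y ^ j) (i, j) \<in> M" unfolding M_def by (rule imageI)
    then show "a * b \<in> zspan M" using ij by (auto intro: zsb)
  qed
  have memM: "\<exists>i j. m = x ^ i * y ^ j" if "m \<in> M" for m
    using that unfolding M_def by auto
  have ex: "\<exists>m\<in>M. m \<noteq> 0" using one by (intro bexI[of _ 1]) simp_all
  show "algebraic_int (x + y)"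
  proof (rule mod_crit_set[OF fin ex])
    fix m assume "m \<in> M"
    then obtain i j where m: "m = x ^ i * y ^ j" using memM by blast
    have "(x + y) * m = x ^ Suc i * y ^ j + x ^ i * y ^ Suc j"
      unfolding m power_Suc by (simp only: distrib_right mult.assoc mult.left_commute)
    then show "(x + y) * m \<in> zspan M" using pw zsadd by metis
  qed
  show "algebraic_int (x * y)"
  proof (rule mod_crit_set[OF fin ex])
    fix m assume "m \<in> M"
    then obtain i j where m: "m = x ^ i * y ^ j" using memM by blast
    have "(x * y) * m = x ^ Suc i * y ^ Suc j"
      unfolding m power_Suc by (simp only: mult.assoc mult.left_commute)
    then show "(x * y) * m \<in> zspan M" using pw by metis
  qed
qed



lemma mult_identity_aux:
  fixes u v P Q A B C D A' B' C' D' :: real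
  assumes "P = u^2" "Q = v^2"
  shows "(A + B*u + C*v + D*(u*v)) * (A' + B'*u + C'*v + D'*(u*v)) =
     (A*A' + P*B*B' + Q*C*C' + P*Q*D*D') + (A*B' + B*A' + Q*(C*D' + D*C'))*u
     + (A*C' + C*A' + P*(B*D' + D*B'))*v + (A*D' + D*A' + B*C' + C*B')*(u*v)"
  unfolding assms by (simp add: algebra_simps power2_eq_square)

locale bq =
  fixes p q :: nat
  assumes p0: "p > 0" and q0: "q > 0"
    and deg4: "\<forall>a b c d :: rat.
       of_rat a + of_rat b * sqrt (real p) + of_rat c * sqrt (real q)
         + of_rat d * sqrt (real p * real q) = 0 \<longrightarrow> a = 0 \<and> b = 0 \<and> c = 0 \<and> d = 0"
begin

definition mk :: "rat \<Rightarrow> rat \<Rightarrow> rat \<Rightarrow> rat \<Rightarrow> real" where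
  "mk a b c d = of_rat a + of_rat b * sqrt (real p) + of_rat c * sqrt (real q)
         + of_rat d * sqrt (real p * real q)"

abbreviation "K \<equiv> biquad_field p q"

lemma K_iff: "x \<in> K \<longleftrightarrow> (\<exists>a b c d. x = mk a b c d)"
  by (auto simp: biquad_field_def mk_def)

lemma mk_in_K [simp, intro]: "mk a b c d \<in> K"
  using K_iff by blast

lemma sqp2: "sqrt (real p) ^ 2 = real p" by simp
lemma sqq2: "sqrt (real q) ^ 2 = real q" by simp
lemma sqpq: "sqrt (real p * real q) = sqrt (real p) * sqrt (real q)" by (simp add: real_sqrt_mult)

lemma mk_diff: "mk a b c d - mk a' b' c' d' = mk (a-a') (b-b') (c-c') (d-d')"
  by (simp add: mk_def of_rat_diff algebra_simps)

lemma mk_add: "mk a b c d + mk a' b' c' d' = mk (a+a') (b+b') (c+c') (d+d')"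
  by (simp add: mk_def of_rat_add algebra_simps)

lemma mk_uminus: "- mk a b c d = mk (-a) (-b) (-c) (-d)"
  by (simp add: mk_def of_rat_minus algebra_simps)

lemma mk_mult: "mk a b c d * mk a' b' c' d' =
   mk (a*a' + of_nat p*b*b' + of_nat q*c*c' + of_nat p*of_nat q*d*d')
      (a*b' + b*a' + of_nat q*(c*d' + d*c'))
      (a*c' + c*a' + of_nat p*(b*d' + d*b'))
      (a*d' + d*a' + b*c' + c*b')"
  unfolding mk_def sqpq
  by (simp add: of_rat_add of_rat_mult mult_identity_aux[OF sqp2[symmetric] sqq2[symmetric]])

lemma mk_rat: "of_rat a = mk a 0 0 0" by (simp add: mk_def)

lemma mk_eq0: "mk a b c d = 0 \<Longrightarrow> a = 0 \<and> b = 0 \<and> c = 0 \<and> d = 0"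
  using deg4 unfolding mk_def by blast

lemma mk_inj: "mk a b c d = mk a' b' c' d' \<Longrightarrow> a = a' \<and> b = b' \<and> c = c' \<and> d = d'"
proof -
  assume "mk a b c d = mk a' b' c' d'"
  hence "mk (a-a') (b-b') (c-c') (d-d') = 0" by (simp flip: mk_diff)
  thus ?thesis using mk_eq0 by force
qed

lemma K_add: "x \<in> K \<Longrightarrow> y \<in> K \<Longrightarrow> x + y \<in> K"
  by (metis K_iff mk_add)
lemma K_mult: "x \<in> K \<Longrightarrow> y \<in> K \<Longrightarrow> x * y \<in> K"
  by (metis K_iff mk_mult)
lemma K_uminus: "x \<in> K \<Longrightarrow> - x \<in> K"
  by (metis K_iff mk_uminus)
lemma K_rat: "of_rat a \<in> K"
  by (auto simp: K_iff mk_rat)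
lemma K_int: "of_int n \<in> K"
  using K_rat[of "of_int n"] by simp
lemma K_diff: "x \<in> K \<Longrightarrow> y \<in> K \<Longrightarrow> x - y \<in> K"
  using K_add K_uminus by (metis diff_conv_add_uminus)

definition cj :: "rat \<Rightarrow> rat \<Rightarrow> real \<Rightarrow> real" where
  "cj s t x = (THE y. \<exists>a b c d. x = mk a b c d \<and> y = mk a (s*b) (t*c) (s*t*d))"

lemma cj_mk [simp]: "cj s t (mk a b c d) = mk a (s*b) (t*c) (s*t*d)"
  unfolding cj_def
  by (rule the_equality) (auto dest: mk_inj)

lemma cj_add: "x \<in> K \<Longrightarrow> y \<in> K \<Longrightarrow> cj s t (x + y) = cj s t x + cj s t y"
  by (auto simp: K_iff mk_add algebra_simps)

lemma cj_uminus: "x \<in> K \<Longrightarrow> cj s t (- x) = - cj s t x"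
  by (auto simp: K_iff mk_uminus)

lemma cj_diff: "x \<in> K \<Longrightarrow> y \<in> K \<Longrightarrow> cj s t (x - y) = cj s t x - cj s t y"
  using cj_add[of x "-y" s t] cj_uminus[of y s t] K_uminus[of y] by simp

lemma cj_mult: "s*s = 1 \<Longrightarrow> t*t = 1 \<Longrightarrow> x \<in> K \<Longrightarrow> y \<in> K \<Longrightarrow> cj s t (x * y) = cj s t x * cj s t y"
proof -
  assume st: "s*s = 1" "t*t = 1" and "x \<in> K" "y \<in> K"
  then obtain a b c d a' b' c' d' where xy: "x = mk a b c d" "y = mk a' b' c' d'" by (auto simp: K_iff)
  have s: "s = 1 \<or> s = -1" and t: "t = 1 \<or> t = -1" using st by (simp_all add: square_eq_1_iff)
  show ?thesis unfolding xy mk_mult cj_mk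
    using s t by (elim disjE) (simp_all add: algebra_simps)
qed

lemma cj_rat [simp]: "cj s t (of_rat a) = of_rat a"
  by (simp add: mk_rat)

lemma cj_int [simp]: "cj s t (of_int n) = of_int n"
  using cj_rat[of s t "of_int n"] by simp

lemma cj_0 [simp]: "cj s t 0 = 0"
  using cj_rat[of s t 0] by simp

lemma cj_K: "x \<in> K \<Longrightarrow> cj s t x \<in> K"
  by (metis K_iff cj_mk)

lemma cj_11: "x \<in> K \<Longrightarrow> cj 1 1 x = x"
  by (auto simp: K_iff)

lemma cj_comp: "x \<in> K \<Longrightarrow> cj s t (cj s' t' x) = cj (s*s') (t*t') x"
  by (auto simp: K_iff algebra_simps)

lemma cj_trace: "cj 1 1 (mk a b c d) + cj (-1) 1 (mk a b c d) + cj 1 (-1) (mk a b c d)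
    + cj (-1) (-1) (mk a b c d) = 4 * of_rat a"
  unfolding cj_mk by (simp add: mk_def of_rat_minus algebra_simps)

lemma fixA: assumes "x \<in> K" "cj 1 (-1) x = x"
  shows "\<exists>a b. x = of_rat a + of_rat b * sqrt (real p) \<and> cj (-1) 1 x = of_rat a - of_rat b * sqrt (real p)"
proof -
  obtain a b c d where x: "x = mk a b c d" using assms(1) K_iff by blast
  have "mk a b (-c) (-d) = mk a b c d" using assms(2) x by simp
  hence "c = 0" "d = 0" using mk_inj by force+
  hence "x = of_rat a + of_rat b * sqrt (real p) \<and> cj (-1) 1 x = of_rat a - of_rat b * sqrt (real p)"
    unfolding x cj_mk by (simp add: mk_def of_rat_minus)
  thus ?thesis by blast
qed

lemma fixB: assumes "x \<in> K" "cj (-1) 1 x = x"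
  shows "\<exists>a b. x = of_rat a + of_rat b * sqrt (real q) \<and> cj 1 (-1) x = of_rat a - of_rat b * sqrt (real q)"
proof -
  obtain a b c d where x: "x = mk a b c d" using assms(1) K_iff by blast
  have "mk a (-b) c (-d) = mk a b c d" using assms(2) x by simp
  hence "b = 0" "d = 0" using mk_inj by force+
  hence "x = of_rat a + of_rat c * sqrt (real q) \<and> cj 1 (-1) x = of_rat a - of_rat c * sqrt (real q)"
    unfolding x cj_mk by (simp add: mk_def of_rat_minus)
  thus ?thesis by blast
qed

lemma fixC: assumes "x \<in> K" "cj (-1) (-1) x = x"
  shows "\<exists>a b. x = of_rat a + of_rat b * sqrt (real p * real q) \<and> cj 1 (-1) x = of_rat a - of_rat b * sqrt (real p * real q)"
proof -
  obtain a b c d where x: "x = mk a b c d" using assms(1) K_iff by blast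
  have "mk a (-b) (-c) d = mk a b c d" using assms(2) x by simp
  hence "b = 0" "c = 0" using mk_inj by force+
  hence "x = of_rat a + of_rat d * sqrt (real p * real q) \<and> cj 1 (-1) x = of_rat a - of_rat d * sqrt (real p * real q)"
    unfolding x cj_mk by (simp add: mk_def of_rat_minus)
  thus ?thesis by blast
qed

lemma cj_poly:
  assumes "x \<in> K" "s*s = 1" "t*t = 1"
  shows "(\<forall>i. coeff P i \<in> \<int>) \<Longrightarrow> poly P x \<in> K \<and> cj s t (poly P x) = poly P (cj s t x)"
proof (induction P)
  case 0
  then show ?case using K_int[of 0] by simp
next
  case (pCons a P)
  have a: "a \<in> \<int>" using pCons.prems by (metis coeff_pCons_0)
  have "\<forall>i. coeff P i \<in> \<int>" using pCons.prems by (metis coeff_pCons_Suc)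
  with pCons.IH have IH: "poly P x \<in> K" "cj s t (poly P x) = poly P (cj s t x)" by auto
  from a obtain n where n: "a = of_int n" by (auto elim: Ints_cases)
  have "x * poly P x \<in> K" using K_mult assms(1) IH(1) by blast
  moreover have "cj s t (x * poly P x) = cj s t x * poly P (cj s t x)"
    using cj_mult[OF assms(2,3) assms(1) IH(1)] IH(2) by simp
  ultimately show ?case using K_int[of n] K_add cj_add[of "of_int n"] by (simp add: n)
qed

lemma cj_algint:
  assumes "x \<in> K" "algebraic_int x" "s*s = 1" "t*t = 1"
  shows "algebraic_int (cj s t x)"
proof -
  from assms(2) obtain P where P: "lead_coeff P = 1" "\<forall>i. coeff P i \<in> \<int>" "poly P x = 0"
    by (auto elim: algebraic_int.cases)
  have "poly P (cj s t x) = cj s t 0"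
    using cj_poly[OF assms(1,3,4) P(2)] P(3) by simp
  also have "cj s t 0 = 0" using cj_int[of s t 0] by simp
  finally show ?thesis using P by (intro algebraic_int.intros[of P]) auto
qed

end


context bq begin

definition E :: "rat \<Rightarrow> rat \<Rightarrow> real \<Rightarrow> real" where
  "E s t x = (if x \<in> K then cj s t x else 0)"

definition G :: "(rat \<times> rat) set" where "G = {(1,1),(1,-1),(-1,1),(-1,-1)}"

lemma K_one: "1 \<in> K" using K_rat[of 1] by simp

lemma E_emb: assumes "s*s = 1" "t*t = 1" shows "E s t \<in> real_embeddings p q"
  unfolding real_embeddings_def E_def
  using assms K_add K_mult K_one cj_add cj_mult cj_rat[of s t 1] by auto

lemma sp_K: "sqrt (real p) \<in> K" using mk_in_K[of 0 1 0 0] by (simp add: mk_def)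
lemma sq_K: "sqrt (real q) \<in> K" using mk_in_K[of 0 0 1 0] by (simp add: mk_def)

lemma emb_E:
  assumes "\<sigma> \<in> real_embeddings p q"
  shows "\<exists>s t. s*s = 1 \<and> t*t = 1 \<and> \<sigma> = E s t"
proof -
  have add: "\<And>x y. x \<in> K \<Longrightarrow> y \<in> K \<Longrightarrow> \<sigma> (x + y) = \<sigma> x + \<sigma> y"
    and mul: "\<And>x y. x \<in> K \<Longrightarrow> y \<in> K \<Longrightarrow> \<sigma> (x * y) = \<sigma> x * \<sigma> y"
    and one: "\<sigma> 1 = 1" and out: "\<And>x. x \<notin> K \<Longrightarrow> \<sigma> x = 0"
  proof -
    have h: "(\<forall>x\<in>K. \<forall>y\<in>K. \<sigma> (x + y) = \<sigma> x + \<sigma> y \<and> \<sigma> (x * y) = \<sigma> x * \<sigma> y)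
         \<and> \<sigma> 1 = 1 \<and> (\<forall>x. x \<notin> K \<longrightarrow> \<sigma> x = 0)"
      using assms unfolding real_embeddings_def by simp
    show "\<And>x y. x \<in> K \<Longrightarrow> y \<in> K \<Longrightarrow> \<sigma> (x + y) = \<sigma> x + \<sigma> y" using h by blast
    show "\<And>x y. x \<in> K \<Longrightarrow> y \<in> K \<Longrightarrow> \<sigma> (x * y) = \<sigma> x * \<sigma> y" using h by blast
    show "\<sigma> 1 = 1" using h by blast
    show "\<And>x. x \<notin> K \<Longrightarrow> \<sigma> x = 0" using h by blast
  qed
  have K0: "0 \<in> K" using K_int[of 0] by simp
  have s0: "\<sigma> 0 = 0" using add[OF K0 K0] by simp
  have snat: "\<sigma> (of_nat n) = of_nat n" for n
  proof (induction n)
    case 0 then show ?case using s0 by simp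
  next
    case (Suc n)
    have "\<sigma> (of_nat (Suc n)) = \<sigma> (1 + of_nat n)" by simp
    also have "\<dots> = 1 + of_nat n" using add[OF K_one, of "of_nat n"] K_int[of "int n"] Suc one by simp
    finally show ?case by simp
  qed
  have sneg: "\<sigma> (- x) = - \<sigma> x" if "x \<in> K" for x
    using add[OF that K_uminus[OF that]] s0 by simp
  have sint: "\<sigma> (of_int z) = of_int z" for z
  proof (cases "z \<ge> 0")
    case True then show ?thesis using snat[of "nat z"] by simp
  next
    case False
    then have e: "of_int z = - (of_nat (nat (-z)) :: real)" by simp
    have "of_nat (nat (-z)) \<in> K" using K_int[of "int (nat (-z))"] by (simp only: of_int_of_nat_eq)
    then have "\<sigma> (- (of_nat (nat (-z)))) = - of_nat (nat (-z))" using sneg snat by metis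
    then show ?thesis by (simp only: e)
  qed
  have srat: "\<sigma> (of_rat r) = of_rat r" for r
  proof -
    obtain a b where ab: "r = of_int a / of_int b" "b > 0"
        by (metis Fract_of_int_quotient quotient_of_denom_pos quotient_of_div surj_pair)
    have e: "(of_rat r :: real) = of_int a / of_int b" using ab by (simp add: of_rat_divide)
    have "of_rat r * of_int b = (of_int a :: real)" using ab by (simp add: of_rat_divide)
    hence "\<sigma> (of_rat r * of_int b) = of_int a" using sint by simp
    hence "\<sigma> (of_rat r) * of_int b = of_int a" using mul[OF K_rat K_int, of r b] sint by simp
    hence "\<sigma> (of_rat r) = of_int a / of_int b" using ab(2) by (simp add: field_simps)
    thus ?thesis using e by simp
  qed
  define u where "u = \<sigma> (sqrt (real p))"
  define v where "v = \<sigma> (sqrt (real q))"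
  have "u * u = \<sigma> (of_nat p)" unfolding u_def using mul[OF sp_K sp_K] by simp
  hence uu: "u * u = sqrt (real p) * sqrt (real p)" using snat by simp
  have u: "u = sqrt (real p) \<or> u = - sqrt (real p)"
  proof -
    have "(u - sqrt (real p)) * (u + sqrt (real p)) = 0" using uu by (simp add: algebra_simps)
    thus ?thesis by (simp add: eq_neg_iff_add_eq_0)
  qed
  have "v * v = \<sigma> (of_nat q)" unfolding v_def using mul[OF sq_K sq_K] by simp
  hence vv: "v * v = sqrt (real q) * sqrt (real q)" using snat by simp
  have v: "v = sqrt (real q) \<or> v = - sqrt (real q)"
  proof -
    have "(v - sqrt (real q)) * (v + sqrt (real q)) = 0" using vv by (simp add: algebra_simps)
    thus ?thesis by (simp add: eq_neg_iff_add_eq_0)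
  qed
  have smk: "\<sigma> (mk a b c d) = of_rat a + of_rat b * u + of_rat c * v + of_rat d * (u * v)" for a b c d
  proof -
    have spq: "\<sigma> (sqrt (real p * real q)) = u * v"
      unfolding sqpq u_def v_def by (rule mul[OF sp_K sq_K])
    have K1: "of_rat b * sqrt (real p) \<in> K" "of_rat c * sqrt (real q) \<in> K"
      "of_rat d * sqrt (real p * real q) \<in> K"
      using K_mult[OF K_rat sp_K] K_mult[OF K_rat sq_K] K_mult[OF K_rat K_mult[OF sp_K sq_K]]
      by (auto simp: sqpq)
    have spqK: "sqrt (real p * real q) \<in> K" using K_mult[OF sp_K sq_K] by (simp add: sqpq)
    show ?thesis unfolding mk_def
      apply (subst add) apply (rule K_add, rule K_add, rule K_rat, rule K1(1), rule K1(2), rule K1(3))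
      apply (subst add) apply (rule K_add, rule K_rat, rule K1(1), rule K1(2))
      apply (subst add) apply (rule K_rat, rule K1(1))
      using mul[OF K_rat sp_K] mul[OF K_rat sq_K] mul[OF K_rat spqK] srat spq
      by (simp add: u_def v_def)
  qed
  define s :: rat where "s = (if u = sqrt (real p) then 1 else -1)"
  define t :: rat where "t = (if v = sqrt (real q) then 1 else -1)"
  have su: "of_rat s * sqrt (real p) = u" using u by (auto simp: s_def)
  have tv: "of_rat t * sqrt (real q) = v" using v by (auto simp: t_def)
  have "\<sigma> = E s t"
  proof
    fix x show "\<sigma> x = E s t x"
    proof (cases "x \<in> K")
      case True
      then obtain a b c d where x: "x = mk a b c d" using K_iff by blast
      have "E s t x = mk a (s*b) (t*c) (s*t*d)" using True by (simp add: E_def x)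
      also have "\<dots> = of_rat a + of_rat b * u + of_rat c * v + of_rat d * (u * v)"
        unfolding mk_def sqpq su[symmetric] tv[symmetric] by (simp add: of_rat_mult algebra_simps)
      finally show ?thesis using smk x by simp
    next
      case False then show ?thesis using out by (simp add: E_def)
    qed
  qed
  moreover have "s * s = 1" "t * t = 1" by (auto simp: s_def t_def)
  ultimately show ?thesis by blast
qed

lemma emb_set: "real_embeddings p q = (\<lambda>(s,t). E s t) ` G"
proof
  show "real_embeddings p q \<subseteq> (\<lambda>(s,t). E s t) ` G"
  proof
    fix \<sigma> assume "\<sigma> \<in> real_embeddings p q"
    then obtain s t where st: "s*s = 1" "t*t = 1" "\<sigma> = E s t" using emb_E by blast
    hence "(s,t) \<in> G" by (auto simp: G_def square_eq_1_iff)
    thus "\<sigma> \<in> (\<lambda>(s,t). E s t) ` G" using st by force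
  qed
  show "(\<lambda>(s,t). E s t) ` G \<subseteq> real_embeddings p q"
    using E_emb by (auto simp: G_def)
qed

lemma sp_pos: "sqrt (real p) > 0" using p0 by simp
lemma sq_pos: "sqrt (real q) > 0" using q0 by simp

lemma E_sp: "E s t (sqrt (real p)) = of_rat s * sqrt (real p)"
proof -
  have "E s t (mk 0 1 0 0) = mk 0 s 0 0" by (simp add: E_def)
  thus ?thesis by (simp add: mk_def)
qed
lemma E_sq: "E s t (sqrt (real q)) = of_rat t * sqrt (real q)"
proof -
  have "E s t (mk 0 0 1 0) = mk 0 0 t 0" by (simp add: E_def)
  thus ?thesis by (simp add: mk_def)
qed

lemma E_inj: "inj_on (\<lambda>(s,t). E s t) G"
proof (rule inj_onI, clarify)
  fix s t s' t' assume "E s t = E s' t'"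
  hence "E s t (sqrt (real p)) = E s' t' (sqrt (real p))" "E s t (sqrt (real q)) = E s' t' (sqrt (real q))"
    by auto
  thus "s = s' \<and> t = t'" using sp_pos sq_pos by (simp add: E_sp E_sq)
qed

lemma norm_eq:
  assumes "x \<in> K"
  shows "field_norm p q x = x * cj (-1) 1 x * cj 1 (-1) x * cj (-1) (-1) x"
proof -
  have "field_norm p q x = (\<Prod>g\<in>G. (\<lambda>(s,t). E s t) g x)"
    unfolding field_norm_def emb_set by (rule prod.reindex[OF E_inj, unfolded comp_def])
  also have "\<dots> = x * cj (-1) 1 x * cj 1 (-1) x * cj (-1) (-1) x"
    using assms by (simp add: G_def E_def cj_11 mult_ac)
  finally show ?thesis .
qed

lemma tp_pos:
  assumes "totally_positive p q x" "s*s = 1" "t*t = 1"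
  shows "cj s t x > 0"
  using assms E_emb[OF assms(2,3)] unfolding totally_positive_def E_def by force

lemma tp_K: "totally_positive p q x \<Longrightarrow> x \<in> K"
  unfolding totally_positive_def by simp

end


lemma sqfree_rat_int:
  fixes m :: nat and e :: rat
  assumes sf: "squarefree m" and ei: "e^2 * of_nat m \<in> \<int>"
  shows "e \<in> \<int>"
proof -
  obtain u v where uv: "quotient_of e = (u,v)" by (cases "quotient_of e")
  have v0: "v > 0" using quotient_of_denom_pos[OF uv] .
  have cop: "coprime u v" using quotient_of_coprime[OF uv] .
  have e: "e = of_int u / of_int v" using quotient_of_div[OF uv] .
  from ei obtain k where k: "e^2 * of_nat m = of_int k" by (auto elim: Ints_cases)
  have "of_int (u^2 * int m) = (of_int (k * v^2) :: rat)"
    using k v0 unfolding e by (simp add: field_simps power2_eq_square)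
  hence eq: "u^2 * int m = k * v^2" by (simp only: of_int_eq_iff)
  hence "v^2 dvd u^2 * int m" by simp
  moreover have "coprime (v^2) (u^2)" using cop by (simp add: coprime_commute)
  ultimately have "v^2 dvd int m" using coprime_dvd_mult_right_iff by blast
  moreover have "int ((nat v)^2) = v^2" using v0 by simp
  ultimately have "(nat v)^2 dvd m" by (metis of_nat_dvd_iff)
  hence "nat v dvd 1" using sf by (rule squarefreeD[rotated])
  hence "v = 1" using v0 by simp
  thus ?thesis using e by simp
qed

lemma rat_int_obtain: "(of_rat x :: real) \<in> \<int> \<Longrightarrow> \<exists>n. x = of_int n"
proof -
  assume "(of_rat x :: real) \<in> \<int>"
  then obtain n where "(of_rat x :: real) = of_int n" by (auto elim: Ints_cases)
  hence "of_rat x = (of_rat (of_int n) :: real)" by simp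
  hence "x = of_int n" by (simp only: of_rat_eq_iff)
  thus ?thesis by blast
qed

lemma TB:
  fixes m :: nat and X Y :: rat and z z' :: real
  assumes sf: "squarefree m" and m0: "m > 0" and Y0: "Y \<noteq> 0"
    and z: "z = of_rat X + of_rat Y * sqrt (real m)"
    and z': "z' = of_rat X - of_rat Y * sqrt (real m)"
    and ai: "algebraic_int z" "algebraic_int z'" and pos: "z > 0" "z' > 0"
  shows "z + z' > sqrt (real m)"
proof -
  have sm: "sqrt (real m) ^ 2 = real m" by simp
  have s: "z + z' = of_rat (2*X)" unfolding z z' by (simp add: of_rat_mult)
  have "z * z' = of_rat X ^ 2 - of_rat Y ^ 2 * sqrt (real m) ^ 2"
    unfolding z z' by (simp add: algebra_simps power2_eq_square)
  also have "\<dots> = of_rat (X^2 - Y^2 * of_nat m)"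
    unfolding sm by (simp add: of_rat_diff of_rat_mult of_rat_power)
  finally have pr: "z * z' = of_rat (X^2 - Y^2 * of_nat m)" .
  have "z + z' \<in> \<int>"
    by (rule rational_algebraic_int_is_int[OF alg_int_add_mult(1)[OF ai]]) (simp add: s)
  hence "(of_rat (2*X)::real) \<in> \<int>" by (simp only: s)
  then obtain A where A: "2*X = of_int A" using rat_int_obtain by blast
  have "z * z' \<in> \<int>"
    by (rule rational_algebraic_int_is_int[OF alg_int_add_mult(2)[OF ai]]) (simp add: pr)
  hence "(of_rat (X^2 - Y^2 * of_nat m)::real) \<in> \<int>" by (simp only: pr)
  then obtain B where B: "X^2 - Y^2 * of_nat m = of_int B" using rat_int_obtain by blast
  have e1: "(2*Y)^2 * of_nat m = (2*X)^2 - 4*(X^2 - Y^2 * of_nat m)"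
    by (simp add: algebra_simps power2_eq_square)
  have e2: "(2*X)^2 - 4*(X^2 - Y^2 * of_nat m) = of_int (A^2 - 4*B)"
    unfolding A B by simp
  have "(2*Y)^2 * of_nat m \<in> \<int>" unfolding e1 e2 by (rule Ints_of_int)
  hence "2*Y \<in> \<int>" by (rule sqfree_rat_int[OF sf])
  then obtain c where c: "2*Y = of_int c" by (auto elim: Ints_cases)
  have c': "of_rat (2*Y) = (of_int c :: real)" by (simp only: c of_rat_of_int_eq)
  have "c \<noteq> 0" using c Y0 by auto
  hence "c^2 > 0" by simp
  hence c1: "c^2 \<ge> 1" by linarith
  have "(z + z')^2 = (z - z')^2 + 4 * (z * z')" by (simp add: algebra_simps power2_eq_square)
  also have "(z - z') = of_rat (2*Y) * sqrt (real m)" unfolding z z' by (simp add: of_rat_mult)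
  also have "(of_rat (2*Y) * sqrt (real m))^2 = of_int (c^2) * real m"
    unfolding c' power_mult_distrib sm by simp
  finally have "(z + z')^2 = of_int (c^2) * real m + 4 * (z * z')" .
  moreover have "of_int (c^2) * real m \<ge> real m"
  proof -
    have "real_of_int (c^2) \<ge> 1" using c1 by (metis of_int_1 of_int_le_iff)
    hence "of_int (c^2) * real m \<ge> 1 * real m" by (rule mult_right_mono) simp
    thus ?thesis by simp
  qed
  moreover have "z * z' > 0" using pos by simp
  ultimately have "(z + z')^2 > real m" by linarith
  hence "sqrt ((z + z')^2) > sqrt (real m)" by (simp only: real_sqrt_less_iff)
  thus ?thesis using pos by simp
qed

lemma r_facts:
  fixes p q :: nat
  assumes "p > 0" "q > 0" "squarefree p" "squarefree q"
  shows "squarefree (p * q div (gcd p q)^2) \<and> p * q div (gcd p q)^2 > 0 \<and>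
         real p * real q = real (gcd p q)^2 * real (p * q div (gcd p q)^2)"
proof -
  define g where "g = gcd p q"
  have g0: "g > 0" using assms(1) by (simp add: g_def)
  have "\<exists>a' b'. p = a' * g \<and> q = b' * g \<and> coprime a' b'"
    unfolding g_def by (rule gcd_coprime_exists) (use assms(1) in simp)
  then obtain p1 q1 where pq: "p = p1 * g" "q = q1 * g" "coprime p1 q1" by blast
  have pqe: "p * q = (p1 * q1) * g^2" unfolding power2_eq_square
    by (subst pq(1), subst pq(2)) (simp only: mult_ac)
  have r: "p * q div g^2 = p1 * q1" unfolding pqe using g0 by simp
  have s1: "squarefree p1" using assms(3) unfolding pq(1) by (rule squarefree_multD(1))
  have s2: "squarefree q1" using assms(4) unfolding pq(2) by (rule squarefree_multD(1))
  have s3: "squarefree (p1 * q1)" using squarefree_mult_coprime[OF pq(3) s1 s2] .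
  have p1: "p1 > 0" using assms(1) pq(1) by (cases p1) auto
  have q1: "q1 > 0" using assms(2) pq(2) by (cases q1) auto
  have e: "real p * real q = real g^2 * real (p1 * q1)"
    using arg_cong[OF pqe, of real] by (simp add: mult_ac)
  show ?thesis unfolding g_def[symmetric] r using s3 p1 q1 e by simp
qed



lemma two_eq_aux:
  fixes P Q u v :: real
  assumes "P > 0" "Q > 0" "u > 0" "v > 0" "P * v = Q * u" "P * u = Q * v"
  shows "u = v \<and> P = Q"
proof -
  have h: "Q * (u * u) = Q * (v * v)"
  proof -
    have "Q * (u * u) = (Q * u) * u" by (simp only: mult.assoc)
    also have "\<dots> = (P * v) * u" using assms(5) by simp
    also have "\<dots> = (P * u) * v" by (simp only: mult_ac)
    also have "\<dots> = (Q * v) * v" using assms(6) by simp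
    also have "\<dots> = Q * (v * v)" by (simp only: mult.assoc)
    finally show ?thesis .
  qed
  hence "u * u = v * v" using assms(2) by simp
  hence "(u - v) * (u + v) = 0" by (simp add: algebra_simps)
  hence "u = v" using assms(3,4) by simp
  thus ?thesis using assms(4,5) by simp
qed

lemma six_bound:
  fixes b0 b1 b2 b3 c0 c1 c2 c3 :: real
  assumes "b0 \<ge> 0" "b1 \<ge> 0" "b2 \<ge> 0" "b3 \<ge> 0" "c0 \<ge> 0" "c1 \<ge> 0" "c2 \<ge> 0" "c3 \<ge> 0"
  shows "(b0+c0)*(b1+c1)*(b2+c2)*(b3+c3) \<ge>
    b0*b2*c1*c3 + b1*b3*c0*c2 + b0*b1*c2*c3 + b2*b3*c0*c1 + b0*b3*c1*c2 + b1*b2*c0*c3"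
proof -
  have "(b0+c0)*(b1+c1)*(b2+c2)*(b3+c3) =
    (b0*b2*c1*c3 + b1*b3*c0*c2 + b0*b1*c2*c3 + b2*b3*c0*c1 + b0*b3*c1*c2 + b1*b2*c0*c3)
    + (b0*b1*b2*b3 + c0*c1*c2*c3 + b0*c1*c2*c3 + b1*c0*c2*c3 + b2*c0*c1*c3 + b3*c0*c1*c2
       + b0*b1*b2*c3 + b0*b1*b3*c2 + b0*b2*b3*c1 + b1*b2*b3*c0)"
    by (simp add: algebra_simps)
  moreover have "b0*b1*b2*b3 + c0*c1*c2*c3 + b0*c1*c2*c3 + b1*c0*c2*c3 + b2*c0*c1*c3 + b3*c0*c1*c2
       + b0*b1*b2*c3 + b0*b1*b3*c2 + b0*b2*b3*c1 + b1*b2*b3*c0 \<ge> 0"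
    using assms by (intro add_nonneg_nonneg mult_nonneg_nonneg) auto
  ultimately show ?thesis by linarith
qed

lemma four_bound:
  fixes b c B C b' c' B' C' :: real
  assumes pos: "b > 0" "c > 0" "B > 0" "C > 0" "b' > 0" "c' > 0" "B' > 0" "C' > 0"
    and r1: "b * C = B * c" and r2: "b' * C' = B' * c'"
  shows "(b+c)*(B+C)*(b'+c')*(B'+C') \<ge> 4 * (b*C*c'*C' + b'*c*C*C')"
proof -
  define x where "x = b / c"
  define y where "y = b' / c'"
  have b: "b = x * c" using pos by (simp add: x_def)
  have B: "B = x * C" using pos r1 by (simp add: x_def field_simps)
  have b': "b' = y * c'" using pos by (simp add: y_def)
  have B': "B' = y * C'" using pos r2 by (simp add: y_def field_simps)
  have x0: "x > 0" "y > 0" using pos by (simp_all add: x_def y_def)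
  define A where "A = c * C * c' * C'"
  have A0: "A > 0" using pos by (simp add: A_def)
  have lhs: "(b+c)*(B+C)*(b'+c')*(B'+C') = A * ((1+x)*(1+y))^2"
    unfolding b B b' B' A_def by (simp add: algebra_simps power2_eq_square)
  have rhs: "4 * (b*C*c'*C' + b'*c*C*C') = A * (4 * (x + y))"
    unfolding b B b' B' A_def by (simp add: algebra_simps)
  have "(1+x)*(1+y) \<ge> 1 + (x + y)" using x0 by (simp add: algebra_simps)
  hence "((1+x)*(1+y))^2 \<ge> (1 + (x+y))^2" using x0 by (intro power_mono) auto
  moreover have "(1 + (x+y))^2 \<ge> 4 * (x + y)"
  proof -
    have "(1 + (x+y))^2 - 4 * (x+y) = (1 - (x+y))^2" by (simp add: algebra_simps power2_eq_square)
    thus ?thesis by (metis diff_ge_0_iff_ge zero_le_power2)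
  qed
  ultimately have "((1+x)*(1+y))^2 \<ge> 4 * (x + y)" by linarith
  hence "A * ((1+x)*(1+y))^2 \<ge> A * (4 * (x + y))" using A0 by simp
  thus ?thesis using lhs rhs by simp
qed



context bq begin

lemma ctab:
  assumes "x \<in> K"
  shows "cj (-1) 1 (cj (-1) 1 x) = x" "cj (-1) 1 (cj 1 (-1) x) = cj (-1) (-1) x"
    "cj (-1) 1 (cj (-1) (-1) x) = cj 1 (-1) x"
    "cj 1 (-1) (cj (-1) 1 x) = cj (-1) (-1) x" "cj 1 (-1) (cj 1 (-1) x) = x"
    "cj 1 (-1) (cj (-1) (-1) x) = cj (-1) 1 x"
    "cj (-1) (-1) (cj (-1) 1 x) = cj 1 (-1) x" "cj (-1) (-1) (cj 1 (-1) x) = cj (-1) 1 x"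
    "cj (-1) (-1) (cj (-1) (-1) x) = x"
  using cj_comp[OF assms] cj_11[OF assms] by simp_all

lemma cj_mult4:
  assumes "s*s = 1" "t*t = 1" "x \<in> K" "y \<in> K" "z \<in> K" "w \<in> K"
  shows "cj s t (x * y * z * w) = cj s t x * cj s t y * cj s t z * cj s t w"
proof -
  have "x * y \<in> K" "x * y * z \<in> K" using assms K_mult by auto
  thus ?thesis using cj_mult[OF assms(1,2)] assms by simp
qed

lemma ratio_contra:
  assumes bO: "\<beta> \<in> ring_of_integers p q" and btp: "totally_positive p q \<beta>"
    and gO: "\<gamma> \<in> ring_of_integers p q" and gtp: "totally_positive p q \<gamma>"
    and ab: "\<alpha> = \<beta> + \<gamma>"
    and nodiv: "\<forall>n::int. n > 1 \<longrightarrow> \<alpha> / of_int n \<notin> ring_of_integers p q"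
    and r1: "\<beta> * cj (-1) 1 \<gamma> = cj (-1) 1 \<beta> * \<gamma>"
    and r2: "\<beta> * cj 1 (-1) \<gamma> = cj 1 (-1) \<beta> * \<gamma>"
    and r3: "\<beta> * cj (-1) (-1) \<gamma> = cj (-1) (-1) \<beta> * \<gamma>"
  shows False
proof -
  have bK: "\<beta> \<in> K" "algebraic_int \<beta>" using bO by (auto simp: ring_of_integers_def)
  have gK: "\<gamma> \<in> K" "algebraic_int \<gamma>" using gO by (auto simp: ring_of_integers_def)
  obtain a b c d where bm: "\<beta> = mk a b c d" using bK K_iff by blast
  obtain a' b' c' d' where gm: "\<gamma> = mk a' b' c' d'" using gK K_iff by blast
  have trb: "\<beta> + cj (-1) 1 \<beta> + cj 1 (-1) \<beta> + cj (-1) (-1) \<beta> = 4 * of_rat a"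
    using cj_trace[of a b c d] cj_11 by (simp add: bm)
  have trg: "\<gamma> + cj (-1) 1 \<gamma> + cj 1 (-1) \<gamma> + cj (-1) (-1) \<gamma> = 4 * of_rat a'"
    using cj_trace[of a' b' c' d'] cj_11 by (simp add: gm)
  have gpos: "\<gamma> > 0" "cj (-1) 1 \<gamma> > 0" "cj 1 (-1) \<gamma> > 0" "cj (-1) (-1) \<gamma> > 0"
    using tp_pos[OF gtp, of 1 1] tp_pos[OF gtp, of "-1" 1] tp_pos[OF gtp, of 1 "-1"]
      tp_pos[OF gtp, of "-1" "-1"] cj_11[OF gK(1)] by simp_all
  have bpos: "\<beta> > 0" using tp_pos[OF btp, of 1 1] cj_11[OF bK(1)] by simp
  have "\<beta> * (4 * of_rat a') = \<gamma> * (4 * of_rat a)"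
    unfolding trb[symmetric] trg[symmetric] using r1 r2 r3 by (simp add: algebra_simps)
  hence eq: "\<beta> * of_rat a' = \<gamma> * of_rat a" by simp
  have a'0: "(of_rat a' :: real) > 0" using trg gpos by linarith
  hence "a' > 0" by simp
  have bq: "\<beta> = of_rat (a / a') * \<gamma>" using eq a'0 by (simp add: of_rat_divide field_simps)
  define e where "e = a / a' + 1"
  have al: "\<alpha> = of_rat e * \<gamma>" using ab bq by (simp add: e_def of_rat_add algebra_simps)
  have "of_rat (a / a') * \<gamma> > 0" using bpos bq by simp
  hence "a / a' > 0" using gpos(1) by (simp add: zero_less_mult_iff)
  hence e1: "e > 1" by (simp add: e_def)
  obtain u v where uv: "quotient_of e = (u, v)" by (cases "quotient_of e")
  have v0: "v > 0" using quotient_of_denom_pos[OF uv] .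
  have cop: "coprime u v" using quotient_of_coprime[OF uv] .
  have ee: "e = of_int u / of_int v" using quotient_of_div[OF uv] .
  have "of_int u / of_int v > (1::rat)" using e1 ee by simp
  hence "u > v" using v0 by (simp add: field_simps)
  hence u1: "u > 1" using v0 by simp
  obtain s t where st: "s * u + t * v = gcd u v" using bezout_int by blast
  have g1: "gcd u v = 1" using cop by simp
  have "(of_rat e :: real) = of_int u / of_int v" using ee by (simp add: of_rat_divide)
  hence al2: "\<alpha> = of_int u / of_int v * \<gamma>" using al by simp
  have str: "of_int s * of_int u + of_int t * of_int v = (1::real)"
    using st g1 by (metis of_int_1 of_int_add of_int_mult)
  have "\<alpha> / of_int u = of_int s * \<alpha> + of_int t * \<gamma>"
  proof -
    have "of_int s * \<alpha> + of_int t * \<gamma> = \<gamma> * (of_int s * of_int u + of_int t * of_int v) / of_int v"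
      using v0 by (simp add: al2 field_simps)
    also have "\<dots> = \<gamma> / of_int v" using str by simp
    also have "\<dots> = \<alpha> / of_int u" using u1 v0 by (simp add: al2 field_simps)
    finally show ?thesis by simp
  qed
  moreover have "of_int s * \<alpha> + of_int t * \<gamma> \<in> ring_of_integers p q"
  proof -
    have aK: "\<alpha> \<in> K" "algebraic_int \<alpha>"
      using ab K_add bK gK alg_int_add_mult(1) by auto
    have "of_int s * \<alpha> + of_int t * \<gamma> \<in> K"
      using K_add K_mult K_int aK gK by metis
    moreover have "algebraic_int (of_int s * \<alpha> + of_int t * \<gamma>)"
      using alg_int_add_mult aK(2) gK(2) algebraic_int_of_int by metis
    ultimately show ?thesis by (simp add: ring_of_integers_def)
  qed
  ultimately show False using nodiv u1 by metis
qed

end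


context bq begin

lemma main_contra:
  assumes sfp: "squarefree p" and sfq: "squarefree q"
    and bO: "\<beta> \<in> ring_of_integers p q" and btp: "totally_positive p q \<beta>"
    and gO: "\<gamma> \<in> ring_of_integers p q" and gtp: "totally_positive p q \<gamma>"
    and ab: "\<alpha> = \<beta> + \<gamma>"
    and Nlt: "field_norm p q \<alpha> < 2 * min (sqrt (real p)) (min (sqrt (real q))
                 (sqrt (real (p * q div (gcd p q)^2))))"
    and nodiv: "\<forall>n::int. n > 1 \<longrightarrow> \<alpha> / of_int n \<notin> ring_of_integers p q"
  shows False
proof -
  define r where "r = p * q div (gcd p q)^2"
  define g where "g = gcd p q"
  have rf: "squarefree r" "r > 0" "real p * real q = real g^2 * real r"
    using r_facts[OF p0 q0 sfp sfq] by (simp_all add: r_def g_def)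
  have sqr: "sqrt (real p * real q) = real g * sqrt (real r)"
    using rf(3) by (simp add: real_sqrt_mult)
  have bK: "\<beta> \<in> K" "algebraic_int \<beta>" using bO by (auto simp: ring_of_integers_def)
  have gK: "\<gamma> \<in> K" "algebraic_int \<gamma>" using gO by (auto simp: ring_of_integers_def)
  have aK: "\<alpha> \<in> K" using ab K_add bK gK by simp
  define b0 where "b0 = \<beta>"
  define b1 where "b1 = cj (-1) 1 \<beta>"
  define b2 where "b2 = cj 1 (-1) \<beta>"
  define b3 where "b3 = cj (-1) (-1) \<beta>"
  define c0 where "c0 = \<gamma>"
  define c1 where "c1 = cj (-1) 1 \<gamma>"
  define c2 where "c2 = cj 1 (-1) \<gamma>"
  define c3 where "c3 = cj (-1) (-1) \<gamma>"
  note defs = b0_def b1_def b2_def b3_def c0_def c1_def c2_def c3_def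
  have pos: "b0 > 0" "b1 > 0" "b2 > 0" "b3 > 0" "c0 > 0" "c1 > 0" "c2 > 0" "c3 > 0"
    using tp_pos[OF btp, of 1 1] tp_pos[OF btp, of "-1" 1] tp_pos[OF btp, of 1 "-1"]
      tp_pos[OF btp, of "-1" "-1"] cj_11[OF bK(1)]
      tp_pos[OF gtp, of 1 1] tp_pos[OF gtp, of "-1" 1] tp_pos[OF gtp, of 1 "-1"]
      tp_pos[OF gtp, of "-1" "-1"] cj_11[OF gK(1)]
    unfolding defs by simp_all
  have inK: "b0 \<in> K" "b1 \<in> K" "b2 \<in> K" "b3 \<in> K" "c0 \<in> K" "c1 \<in> K" "c2 \<in> K" "c3 \<in> K"
    unfolding defs using bK gK cj_K by auto
  have ai: "algebraic_int b0" "algebraic_int b1" "algebraic_int b2" "algebraic_int b3"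
     "algebraic_int c0" "algebraic_int c1" "algebraic_int c2" "algebraic_int c3"
    unfolding defs using bK gK cj_algint by auto
  note tb = ctab[OF bK(1)] ctab[OF gK(1)]
  have C1: "cj (-1) 1 b0 = b1" "cj (-1) 1 b1 = b0" "cj (-1) 1 b2 = b3" "cj (-1) 1 b3 = b2"
           "cj (-1) 1 c0 = c1" "cj (-1) 1 c1 = c0" "cj (-1) 1 c2 = c3" "cj (-1) 1 c3 = c2"
    unfolding defs using tb by simp_all
  have C2: "cj 1 (-1) b0 = b2" "cj 1 (-1) b1 = b3" "cj 1 (-1) b2 = b0" "cj 1 (-1) b3 = b1"
           "cj 1 (-1) c0 = c2" "cj 1 (-1) c1 = c3" "cj 1 (-1) c2 = c0" "cj 1 (-1) c3 = c1"
    unfolding defs using tb by simp_all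
  have C3: "cj (-1) (-1) b0 = b3" "cj (-1) (-1) b1 = b2" "cj (-1) (-1) b2 = b1" "cj (-1) (-1) b3 = b0"
           "cj (-1) (-1) c0 = c3" "cj (-1) (-1) c1 = c2" "cj (-1) (-1) c2 = c1" "cj (-1) (-1) c3 = c0"
    unfolding defs using tb by simp_all
  have m1: "(-1::rat) * (-1) = 1" "(1::rat) * 1 = 1" by simp_all
  have P4: "x * y * z * w \<in> K" if "x \<in> K" "y \<in> K" "z \<in> K" "w \<in> K" for x y z w
    using that K_mult by simp
  have A4: "algebraic_int (x * y * z * w)" if "algebraic_int x" "algebraic_int y"
    "algebraic_int z" "algebraic_int w" for x y z w :: real
    using that alg_int_add_mult(2) by metis
  note cm1 = cj_mult4[OF m1(1) m1(2)] and cm2 = cj_mult4[OF m1(2) m1(1)]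
    and cm3 = cj_mult4[OF m1(1) m1(1)]
  have N: "field_norm p q \<alpha> = (b0+c0)*(b1+c1)*(b2+c2)*(b3+c3)"
  proof -
    have "field_norm p q \<alpha> = \<alpha> * cj (-1) 1 \<alpha> * cj 1 (-1) \<alpha> * cj (-1) (-1) \<alpha>"
      by (rule norm_eq[OF aK])
    also have "\<dots> = (b0+c0)*(b1+c1)*(b2+c2)*(b3+c3)"
      unfolding ab defs using cj_add bK(1) gK(1) by simp
    finally show ?thesis .
  qed
  define z1 where "z1 = b0 * b2 * c1 * c3"
  define z1' where "z1' = b1 * b3 * c0 * c2"
  define z2 where "z2 = b0 * b1 * c2 * c3"
  define z2' where "z2' = b2 * b3 * c0 * c1"
  define z3 where "z3 = b0 * b3 * c1 * c2"
  define z3' where "z3' = b1 * b2 * c0 * c3"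
  have zpos: "z1 > 0" "z1' > 0" "z2 > 0" "z2' > 0" "z3 > 0" "z3' > 0"
    unfolding z1_def z1'_def z2_def z2'_def z3_def z3'_def using pos by simp_all
  define m where "m = min (sqrt (real p)) (min (sqrt (real q)) (sqrt (real r)))"
  have mle: "m \<le> sqrt (real p)" "m \<le> sqrt (real q)" "m \<le> sqrt (real r)" by (simp_all add: m_def)
  have Nlt': "field_norm p q \<alpha> < 2 * m" using Nlt by (simp add: m_def r_def)
  have six: "field_norm p q \<alpha> \<ge> z1 + z1' + z2 + z2' + z3 + z3'"
    unfolding N z1_def z1'_def z2_def z2'_def z3_def z3'_def
    using six_bound[of b0 b1 b2 b3 c0 c1 c2 c3] pos by simp
  have QA: "w + w' > sqrt (real p)" if h: "w \<in> K" "algebraic_int w" "cj 1 (-1) w = w"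
    "w' = cj (-1) 1 w" "w \<noteq> w'" "w > 0" "w' > 0" for w w'
  proof -
    obtain X Y where XY: "w = of_rat X + of_rat Y * sqrt (real p)"
      "cj (-1) 1 w = of_rat X - of_rat Y * sqrt (real p)" using fixA[OF h(1,3)] by blast
    have "Y \<noteq> 0" using h(4,5) XY by auto
    moreover have "algebraic_int w'" using cj_algint[OF h(1,2)] h(4) by simp
    ultimately show ?thesis using TB[OF sfp p0 _ XY(1) _ h(2) _ h(6,7)] XY(2) h(4) by simp
  qed
  have QB: "w + w' > sqrt (real q)" if h: "w \<in> K" "algebraic_int w" "cj (-1) 1 w = w"
    "w' = cj 1 (-1) w" "w \<noteq> w'" "w > 0" "w' > 0" for w w'
  proof -
    obtain X Y where XY: "w = of_rat X + of_rat Y * sqrt (real q)"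
      "cj 1 (-1) w = of_rat X - of_rat Y * sqrt (real q)" using fixB[OF h(1,3)] by blast
    have "Y \<noteq> 0" using h(4,5) XY by auto
    moreover have "algebraic_int w'" using cj_algint[OF h(1,2)] h(4) by simp
    ultimately show ?thesis using TB[OF sfq q0 _ XY(1) _ h(2) _ h(6,7)] XY(2) h(4) by simp
  qed
  have QC: "w + w' > sqrt (real r)" if h: "w \<in> K" "algebraic_int w" "cj (-1) (-1) w = w"
    "w' = cj 1 (-1) w" "w \<noteq> w'" "w > 0" "w' > 0" for w w'
  proof -
    obtain X Y where XY: "w = of_rat X + of_rat Y * sqrt (real p * real q)"
      "cj 1 (-1) w = of_rat X - of_rat Y * sqrt (real p * real q)" using fixC[OF h(1,3)] by blast
    define Y' where "Y' = Y * of_nat g"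
    have e: "of_rat Y * sqrt (real p * real q) = of_rat Y' * sqrt (real r)"
      unfolding sqr Y'_def by (simp add: of_rat_mult)
    have XY': "w = of_rat X + of_rat Y' * sqrt (real r)"
      "cj 1 (-1) w = of_rat X - of_rat Y' * sqrt (real r)" using XY e by simp_all
    have "Y' \<noteq> 0" using h(4,5) XY' by auto
    moreover have "algebraic_int w'" using cj_algint[OF h(1,2)] h(4) by simp
    ultimately show ?thesis using TB[OF rf(1) rf(2) _ XY'(1) _ h(2) _ h(6,7)] XY'(2) h(4) by simp
  qed
  have z1K: "z1 \<in> K" "algebraic_int z1" unfolding z1_def using inK ai P4 A4 by simp_all
  have z2K: "z2 \<in> K" "algebraic_int z2" unfolding z2_def using inK ai P4 A4 by simp_all
  have z3K: "z3 \<in> K" "algebraic_int z3" unfolding z3_def using inK ai P4 A4 by simp_all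
  have B1: "z1 + z1' > sqrt (real p)" if "z1 \<noteq> z1'"
  proof (rule QA[OF z1K])
    show "cj 1 (-1) z1 = z1" unfolding z1_def using cm2 inK C2 by (simp add: mult_ac)
    show "z1' = cj (-1) 1 z1" unfolding z1_def z1'_def using cm1 inK C1 by (simp add: mult_ac)
  qed (use that zpos in auto)
  have B2: "z2 + z2' > sqrt (real q)" if "z2 \<noteq> z2'"
  proof (rule QB[OF z2K])
    show "cj (-1) 1 z2 = z2" unfolding z2_def using cm1 inK C1 by (simp add: mult_ac)
    show "z2' = cj 1 (-1) z2" unfolding z2_def z2'_def using cm2 inK C2 by (simp add: mult_ac)
  qed (use that zpos in auto)
  have B3: "z3 + z3' > sqrt (real r)" if "z3 \<noteq> z3'"
  proof (rule QC[OF z3K])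
    show "cj (-1) (-1) z3 = z3" unfolding z3_def using cm3 inK C3 by (simp add: mult_ac)
    show "z3' = cj 1 (-1) z3" unfolding z3_def z3'_def using cm2 inK C2 by (simp add: mult_ac)
  qed (use that zpos in auto)
  define w where "w = b0 * c1 * c2 * c3"
  have wK: "w \<in> K" "algebraic_int w" unfolding w_def using inK ai P4 A4 by simp_all
  have wpos: "w > 0" unfolding w_def using pos by simp
  have RC: False if "b1 * c0 = b0 * c1" "b2 * c0 = b0 * c2" "b3 * c0 = b0 * c3"
    using ratio_contra[OF bO btp gO gtp ab nodiv] that unfolding defs by (simp add: mult_ac)
  consider "z1 = z1'" "z2 = z2'" | "z1 = z1'" "z3 = z3'" | "z2 = z2'" "z3 = z3'"
    | "z1 \<noteq> z1'" "z2 \<noteq> z2'" | "z1 \<noteq> z1'" "z3 \<noteq> z3'" | "z2 \<noteq> z2'" "z3 \<noteq> z3'"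
    by blast
  then show False
  proof cases
    case 4
    then show False using B1 B2 six zpos mle Nlt' by linarith
  next
    case 5
    then show False using B1 B3 six zpos mle Nlt' by linarith
  next
    case 6
    then show False using B2 B3 six zpos mle Nlt' by linarith
  next
    case 1
    have "b1 * c2 = b2 * c1 \<and> b0 * c3 = b3 * c0"
      using 1 two_eq_aux[of "b0 * c3" "b3 * c0" "b1 * c2" "b2 * c1"] pos
      unfolding z1_def z1'_def z2_def z2'_def by (simp add: mult_ac)
    hence e1: "b1 * c2 = b2 * c1" and e2: "b0 * c3 = b3 * c0" by auto
    define w' where "w' = b2 * c3 * c0 * c1"
    have w'pos: "w' > 0" unfolding w'_def using pos by simp
    have fx: "cj (-1) (-1) w = w"
    proof -
      have "cj (-1) (-1) w = b3 * c2 * c1 * c0" unfolding w_def using cm3 inK C3 by simp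
      also have "\<dots> = w" unfolding w_def using e2 by (simp add: mult_ac)
      finally show ?thesis .
    qed
    have w'e: "w' = cj 1 (-1) w" unfolding w_def w'_def using cm2 inK C2 by (simp add: mult_ac)
    show False
    proof (cases "w = w'")
      case False
      have "w + w' > sqrt (real r)" by (rule QC[OF wK fx w'e False wpos w'pos])
      moreover have "(b0+c0)*(b3+c3)*(b2+c2)*(b1+c1) \<ge> 4 * (b0*c3*c2*c1 + b2*c0*c3*c1)"
        using four_bound[of b0 c0 b3 c3 b2 c2 b1 c1] pos e1 e2 by (simp add: mult_ac)
      ultimately have "field_norm p q \<alpha> > 4 * sqrt (real r)"
        unfolding N w_def w'_def by (simp add: mult_ac)
      then show False using mle Nlt' real_sqrt_ge_zero[of "real r"] by linarith
    next
      case True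
      hence "b0 * c2 * (c1 * c3) = b2 * c0 * (c1 * c3)" unfolding w_def w'_def by (simp add: mult_ac)
      hence e3: "b0 * c2 = b2 * c0" using pos by simp
      have "b1 * c0 * c2 = b0 * c1 * c2" using e1 e3 by (metis mult.commute mult.left_commute)
      hence "b1 * c0 = b0 * c1" using pos by simp
      then show False using RC e3 e2 by simp
    qed
  next
    case 2
    have "b3 * c2 = b2 * c3 \<and> b0 * c1 = b1 * c0"
      using 2 two_eq_aux[of "b0 * c1" "b1 * c0" "b3 * c2" "b2 * c3"] pos
      unfolding z1_def z1'_def z3_def z3'_def by (simp add: mult_ac)
    hence e1: "b3 * c2 = b2 * c3" and e2: "b0 * c1 = b1 * c0" by auto
    define w' where "w' = b2 * c3 * c0 * c1"
    have w'pos: "w' > 0" unfolding w'_def using pos by simp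
    have fx: "cj (-1) 1 w = w"
    proof -
      have "cj (-1) 1 w = b1 * c0 * c3 * c2" unfolding w_def using cm1 inK C1 by simp
      also have "\<dots> = w" unfolding w_def using e2 by (simp add: mult_ac)
      finally show ?thesis .
    qed
    have w'e: "w' = cj 1 (-1) w" unfolding w_def w'_def using cm2 inK C2 by (simp add: mult_ac)
    show False
    proof (cases "w = w'")
      case False
      have "w + w' > sqrt (real q)" by (rule QB[OF wK fx w'e False wpos w'pos])
      moreover have "(b0+c0)*(b1+c1)*(b2+c2)*(b3+c3) \<ge> 4 * (b0*c1*c2*c3 + b2*c0*c1*c3)"
        using four_bound[of b0 c0 b1 c1 b2 c2 b3 c3] pos e1 e2 by (simp add: mult_ac)
      ultimately have "field_norm p q \<alpha> > 4 * sqrt (real q)"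
        unfolding N w_def w'_def by (simp add: mult_ac)
      then show False using mle Nlt' real_sqrt_ge_zero[of "real q"] by linarith
    next
      case True
      hence "b0 * c2 * (c1 * c3) = b2 * c0 * (c1 * c3)" unfolding w_def w'_def by (simp add: mult_ac)
      hence e3: "b0 * c2 = b2 * c0" using pos by simp
      have "b3 * c0 * c2 = b0 * c3 * c2" using e1 e3 by (metis mult.commute mult.left_commute)
      hence "b3 * c0 = b0 * c3" using pos by simp
      then show False using RC e3 e2 by simp
    qed
  next
    case 3
    have "b3 * c1 = b1 * c3 \<and> b0 * c2 = b2 * c0"
      using 3 two_eq_aux[of "b0 * c2" "b2 * c0" "b3 * c1" "b1 * c3"] pos
      unfolding z2_def z2'_def z3_def z3'_def by (simp add: mult_ac)
    hence e1: "b3 * c1 = b1 * c3" and e2: "b0 * c2 = b2 * c0" by auto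
    define w' where "w' = b1 * c0 * c3 * c2"
    have w'pos: "w' > 0" unfolding w'_def using pos by simp
    have fx: "cj 1 (-1) w = w"
    proof -
      have "cj 1 (-1) w = b2 * c3 * c0 * c1" unfolding w_def using cm2 inK C2 by simp
      also have "\<dots> = w" unfolding w_def using e2 by (simp add: mult_ac)
      finally show ?thesis .
    qed
    have w'e: "w' = cj (-1) 1 w" unfolding w_def w'_def using cm1 inK C1 by (simp add: mult_ac)
    show False
    proof (cases "w = w'")
      case False
      have "w + w' > sqrt (real p)" by (rule QA[OF wK fx w'e False wpos w'pos])
      moreover have "(b0+c0)*(b2+c2)*(b1+c1)*(b3+c3) \<ge> 4 * (b0*c2*c1*c3 + b1*c0*c2*c3)"
        using four_bound[of b0 c0 b2 c2 b1 c1 b3 c3] pos e1 e2 by (simp add: mult_ac)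
      ultimately have "field_norm p q \<alpha> > 4 * sqrt (real p)"
        unfolding N w_def w'_def by (simp add: mult_ac)
      then show False using mle Nlt' real_sqrt_ge_zero[of "real p"] by linarith
    next
      case True
      hence "b0 * c1 * (c2 * c3) = b1 * c0 * (c2 * c3)" unfolding w_def w'_def by (simp add: mult_ac)
      hence e3: "b0 * c1 = b1 * c0" using pos by simp
      have "b3 * c0 * c1 = b0 * c3 * c1" using e1 e3 by (metis mult.commute mult.left_commute)
      hence "b3 * c0 = b0 * c3" using pos by simp
      then show False using RC e3 e2 by simp
    qed
  qed
qed

end

theorem proposition4:
  fixes p q :: nat and \<alpha> :: real
  assumes "p > 0" and "q > 0" and "squarefree p" and "squarefree q"
    and deg4: "\<forall>a b c d :: rat.
       of_rat a + of_rat b * sqrt (real p) + of_rat c * sqrt (real q)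
         + of_rat d * sqrt (real p * real q) = 0 \<longrightarrow> a = 0 \<and> b = 0 \<and> c = 0 \<and> d = 0"
    and "\<alpha> \<in> ring_of_integers p q"
    and "totally_positive p q \<alpha>"
    and "field_norm p q \<alpha> <
           2 * min (sqrt (real p)) (min (sqrt (real q))
                 (sqrt (real (p * q div (gcd p q)^2))))"
    and "\<forall>n :: int. n > 1 \<longrightarrow> \<alpha> / of_int n \<notin> ring_of_integers p q"
  shows "indecomposable p q \<alpha>"
proof -
  interpret bq p q using assms(1,2) deg4 by unfold_locales auto
  show ?thesis
    unfolding indecomposable_def
    using assms(6,7) main_contra[OF assms(3,4) _ _ _ _ _ assms(8,9)] by blast
qed

end
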